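(* Let $d = 10$. (i) If $n = 4(12m+5) + 4(6k+3)\sqrt{10}$ with $m, k \in \mathbb{Z}$, $m \equiv 0 \pmod 5$ and $k \equiv 2 \pmod 5$, then there exist infinitely many $D(n)$-quadruples in $\mathbb{Z}[\sqrt{10}]$. (ii) If $n = 4(12m+11) + 4(6k+3)\sqrt{10}$ with $m, k \in \mathbb{Z}$, $m \equiv 2 \pmod 5$ and $k \equiv 2 \pmod 5$, then there exist infinitely many $D(n)$-quadruples in $\mathbb{Z}[\sqrt{10}]$.
   Context: For $n \in \mathbb{Z}[\sqrt{d}]$, a set $\{a_1,a_2,a_3,a_4\}$ of four distinct non-zero elements of $\mathbb{Z}[\sqrt{d}]$ is called a $D(n)$-quadruple in $\mathbb{Z}[\sqrt{d}]$ if $a_ia_j + n$ is a square of an element of $\mathbb{Z}[\sqrt{d}]$ for all $1 \le i < j \le 4$. *)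

theory Defs
  imports Main
begin

text \<open>Elements of Z[sqrt d] are represented as pairs (a, b) of integers, standing for a + b sqrt d.
  For non-square d (such as d = 10) this representation is faithful (unique).\<close>

type_synonym zsqrt = "int \<times> int"

definition zs_add :: "zsqrt \<Rightarrow> zsqrt \<Rightarrow> zsqrt" where
  "zs_add x y = (fst x + fst y, snd x + snd y)"

definition zs_mult :: "int \<Rightarrow> zsqrt \<Rightarrow> zsqrt \<Rightarrow> zsqrt" where
  "zs_mult d x y = (fst x * fst y + d * snd x * snd y, fst x * snd y + snd x * fst y)"

definition zs_is_square :: "int \<Rightarrow> zsqrt \<Rightarrow> bool" where
  "zs_is_square d x \<longleftrightarrow> (\<exists>y. zs_mult d y y = x)"

definition is_Dn_quadruple :: "int \<Rightarrow> zsqrt \<Rightarrow> zsqrt set \<Rightarrow> bool" where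
  "is_Dn_quadruple d n S \<longleftrightarrow>
     card S = 4 \<and> (0, 0) \<notin> S \<and>
     (\<forall>x\<in>S. \<forall>y\<in>S. x \<noteq> y \<longrightarrow> zs_is_square d (zs_add (zs_mult d x y) n))"

end

theory Submission
  imports Defs
begin

definition qb :: "int \<Rightarrow> int \<Rightarrow> int \<Rightarrow> int \<Rightarrow> zsqrt" where
  "qb n1 n2 A B = (n1 - 1 + (15*A)*(10*n1-2) + 80*(15*B+12)*n2, n2 + 10*(15*A)*n2 + 8*(15*B+12)*n1)"
definition qa :: "int \<Rightarrow> int \<Rightarrow> int \<Rightarrow> int \<Rightarrow> zsqrt" where
  "qa n1 n2 A B = (fst (qb n1 n2 A B) + 3*n1 + 1, snd (qb n1 n2 A B) + 3*n2)"
definition qc :: "int \<Rightarrow> int \<Rightarrow> int \<Rightarrow> int \<Rightarrow> zsqrt" where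
  "qc n1 n2 A B = ((60*A+1)*(n1-1) - 10*(60*B+48)*n2, (60*A+1)*n2 - (60*B+48)*(n1-1))"
definition qd :: "int \<Rightarrow> int \<Rightarrow> int \<Rightarrow> int \<Rightarrow> zsqrt" where
  "qd n1 n2 A B = ((60*A+1)*(9*n1-1) + 90*(60*B+48)*n2, 9*(60*A+1)*n2 + (60*B+48)*(9*n1-1))"
definition qr :: "int \<Rightarrow> int \<Rightarrow> int \<Rightarrow> int \<Rightarrow> zsqrt" where
  "qr n1 n2 A B = (-2*(60*A+1)*n1 - 100*(15*B+12)*n2, -2*(60*A+1)*n2 - 10*(15*B+12)*n1 + 2*(15*B+12))"

lemma sq_ab:
  assumes h: "(60*A+1)^2 - 10*(60*B+48)^2 = (1::int)"
  shows "zs_add (zs_mult 10 (qa n1 n2 A B) (qb n1 n2 A B)) (4*n1, 4*n2)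
         = zs_mult 10 (qr n1 n2 A B) (qr n1 n2 A B)"
  using h unfolding zs_add_def zs_mult_def qa_def qb_def qr_def prod_eq_iff
  by simp algebra

lemma sq_gen:
  assumes h: "(60*A+1)^2 - 10*(60*B+48)^2 = (1::int)"
  shows "zs_is_square 10 (zs_add (zs_mult 10 (qa n1 n2 A B) (qb n1 n2 A B)) (4*n1, 4*n2))"
    "zs_is_square 10 (zs_add (zs_mult 10 (qa n1 n2 A B) (qc n1 n2 A B)) (4*n1, 4*n2))"
    "zs_is_square 10 (zs_add (zs_mult 10 (qb n1 n2 A B) (qc n1 n2 A B)) (4*n1, 4*n2))"
    "zs_is_square 10 (zs_add (zs_mult 10 (qa n1 n2 A B) (qd n1 n2 A B)) (4*n1, 4*n2))"
    "zs_is_square 10 (zs_add (zs_mult 10 (qb n1 n2 A B) (qd n1 n2 A B)) (4*n1, 4*n2))"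
    "zs_is_square 10 (zs_add (zs_mult 10 (qc n1 n2 A B) (qd n1 n2 A B)) (4*n1, 4*n2))"
proof -
  show "zs_is_square 10 (zs_add (zs_mult 10 (qa n1 n2 A B) (qb n1 n2 A B)) (4*n1, 4*n2))"
    unfolding zs_is_square_def using sq_ab[OF h] by metis
  show "zs_is_square 10 (zs_add (zs_mult 10 (qa n1 n2 A B) (qc n1 n2 A B)) (4*n1, 4*n2))"
    unfolding zs_is_square_def
    apply (rule exI[of _ "zs_add (qa n1 n2 A B) (qr n1 n2 A B)"])
    using h unfolding zs_add_def zs_mult_def qa_def qb_def qc_def qr_def prod_eq_iff
    by simp algebra
  show "zs_is_square 10 (zs_add (zs_mult 10 (qb n1 n2 A B) (qc n1 n2 A B)) (4*n1, 4*n2))"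
    unfolding zs_is_square_def
    apply (rule exI[of _ "zs_add (qb n1 n2 A B) (qr n1 n2 A B)"])
    using h unfolding zs_add_def zs_mult_def qa_def qb_def qc_def qr_def prod_eq_iff
    by simp algebra
  show "zs_is_square 10 (zs_add (zs_mult 10 (qa n1 n2 A B) (qd n1 n2 A B)) (4*n1, 4*n2))"
    unfolding zs_is_square_def
    apply (rule exI[of _ "zs_add (qa n1 n2 A B) (-fst (qr n1 n2 A B), - snd (qr n1 n2 A B))"])
    using h unfolding zs_add_def zs_mult_def qa_def qb_def qd_def qr_def prod_eq_iff
    by simp algebra
  show "zs_is_square 10 (zs_add (zs_mult 10 (qb n1 n2 A B) (qd n1 n2 A B)) (4*n1, 4*n2))"
    unfolding zs_is_square_def
    apply (rule exI[of _ "zs_add (qb n1 n2 A B) (-fst (qr n1 n2 A B), - snd (qr n1 n2 A B))"])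
    using h unfolding zs_add_def zs_mult_def qa_def qb_def qd_def qr_def prod_eq_iff
    by simp algebra
  show "zs_is_square 10 (zs_add (zs_mult 10 (qc n1 n2 A B) (qd n1 n2 A B)) (4*n1, 4*n2))"
    unfolding zs_is_square_def
    apply (rule exI[of _ "(3*n1-1, 3*n2)"])
    using h unfolding zs_add_def zs_mult_def qc_def qd_def prod_eq_iff
    by simp algebra
qed

lemma zs_mult_comm: "zs_mult d x y = zs_mult d y x"
  unfolding zs_mult_def by (simp add: algebra_simps)

lemma mod_helper: "x = 3*K + r \<Longrightarrow> 0 \<le> r \<Longrightarrow> r < 3 \<Longrightarrow> x mod 3 = (r::int)"
  by simp
lemma mod_helper5: "x = 5*K + r \<Longrightarrow> 0 \<le> r \<Longrightarrow> r < 5 \<Longrightarrow> x mod 5 = (r::int)"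
  by simp

lemma congs:
  fixes P Q A B :: int
  defines "n1 \<equiv> 15*P+5" and "n2 \<equiv> 30*Q+15"
  shows "fst (qa n1 n2 A B) mod 3 = 2" "fst (qa n1 n2 A B) mod 5 = 0" "snd (qa n1 n2 A B) mod 5 = 0"
   "fst (qb n1 n2 A B) mod 3 = 1" "fst (qb n1 n2 A B) mod 5 = 4" "snd (qb n1 n2 A B) mod 5 = 0"
   "fst (qc n1 n2 A B) mod 3 = 1" "fst (qc n1 n2 A B) mod 5 = 4" "snd (qc n1 n2 A B) mod 5 = 3"
   "fst (qd n1 n2 A B) mod 3 = 2" "fst (qd n1 n2 A B) mod 5 = 4" "snd (qd n1 n2 A B) mod 5 = 2"
proof -
  show "fst (qa n1 n2 A B) mod 3 = 2"
    by (rule mod_helper[where K="4806 + 6000*B + 240*A + 9600*Q + 12000*Q*B + 20*P + 750*P*A"]) (simp_all add: qa_def qb_def n1_def n2_def algebra_simps)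
  show "fst (qa n1 n2 A B) mod 5 = 0"
    by (rule mod_helper5[where K="2884 + 3600*B + 144*A + 5760*Q + 7200*Q*B + 12*P + 450*P*A"]) (simp_all add: qa_def qb_def n1_def n2_def algebra_simps)
  show "snd (qa n1 n2 A B) mod 5 = 0"
    by (rule mod_helper5[where K="108 + 120*B + 450*A + 24*Q + 900*Q*A + 288*P + 360*P*B"]) (simp_all add: qa_def qb_def n1_def n2_def algebra_simps)
  show "fst (qb n1 n2 A B) mod 3 = 1"
    by (rule mod_helper[where K="4801 + 6000*B + 240*A + 9600*Q + 12000*Q*B + 5*P + 750*P*A"]) (simp_all add: qb_def qb_def n1_def n2_def algebra_simps)
  show "fst (qb n1 n2 A B) mod 5 = 4"
    by (rule mod_helper5[where K="2880 + 3600*B + 144*A + 5760*Q + 7200*Q*B + 3*P + 450*P*A"]) (simp_all add: qb_def qb_def n1_def n2_def algebra_simps)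
  show "snd (qb n1 n2 A B) mod 5 = 0"
    by (rule mod_helper5[where K="99 + 120*B + 450*A + 6*Q + 900*Q*A + 288*P + 360*P*B"]) (simp_all add: qb_def qb_def n1_def n2_def algebra_simps)
  show "fst (qc n1 n2 A B) mod 3 = 1"
    by (rule mod_helper[where K="(-2399) + (-3000)*B + 80*A + (-4800)*Q + (-6000)*Q*B + 5*P + 300*P*A"]) (simp_all add: qc_def qb_def n1_def n2_def algebra_simps)
  show "fst (qc n1 n2 A B) mod 5 = 4"
    by (rule mod_helper5[where K="(-1440) + (-1800)*B + 48*A + (-2880)*Q + (-3600)*Q*B + 3*P + 180*P*A"]) (simp_all add: qc_def qb_def n1_def n2_def algebra_simps)
  show "snd (qc n1 n2 A B) mod 5 = 3"
    by (rule mod_helper5[where K="(-36) + (-48)*B + 180*A + 6*Q + 360*Q*A + (-144)*P + (-180)*P*B"]) (simp_all add: qc_def qb_def n1_def n2_def algebra_simps)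
  show "fst (qd n1 n2 A B) mod 3 = 2"
    by (rule mod_helper[where K="21614 + 27000*B + 880*A + 43200*Q + 54000*Q*B + 45*P + 2700*P*A"]) (simp_all add: qd_def qb_def n1_def n2_def algebra_simps)
  show "fst (qd n1 n2 A B) mod 5 = 4"
    by (rule mod_helper5[where K="12968 + 16200*B + 528*A + 25920*Q + 32400*Q*B + 27*P + 1620*P*A"]) (simp_all add: qd_def qb_def n1_def n2_def algebra_simps)
  show "snd (qd n1 n2 A B) mod 5 = 2"
    by (rule mod_helper5[where K="449 + 528*B + 1620*A + 54*Q + 3240*Q*A + 1296*P + 1620*P*B"]) (simp_all add: qd_def qb_def n1_def n2_def algebra_simps)
qed


lemma quad:
  fixes P Q A B :: int
  defines "n1 \<equiv> 15*P+5" and "n2 \<equiv> 30*Q+15"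
  assumes h: "(60*A+1)^2 - 10*(60*B+48)^2 = (1::int)"
  shows "is_Dn_quadruple 10 (4*n1, 4*n2) {qa n1 n2 A B, qb n1 n2 A B, qc n1 n2 A B, qd n1 n2 A B}"
proof -
  let ?a = "qa n1 n2 A B" and ?b = "qb n1 n2 A B" and ?c = "qc n1 n2 A B" and ?d = "qd n1 n2 A B"
  note C = congs[of P Q A B, folded n1_def n2_def]
  have ab: "?a \<noteq> ?b" using C(1,4) by auto
  have ac: "?a \<noteq> ?c" using C(1,7) by auto
  have ad: "?a \<noteq> ?d" using C(2,11) by auto
  have bc: "?b \<noteq> ?c" using C(6,9) by auto
  have bd: "?b \<noteq> ?d" using C(4,10) by auto
  have cd: "?c \<noteq> ?d" using C(9,12) by auto
  have z: "(0,0) \<notin> {?a, ?b, ?c, ?d}"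
  proof -
    have "?a \<noteq> (0,0)" using C(1) by auto
    moreover have "?b \<noteq> (0,0)" using C(4) by auto
    moreover have "?c \<noteq> (0,0)" using C(7) by auto
    moreover have "?d \<noteq> (0,0)" using C(10) by auto
    ultimately show ?thesis by auto
  qed
  have card: "card {?a, ?b, ?c, ?d} = 4" using ab ac ad bc bd cd by simp
  note S = sq_gen[OF h, of n1 n2]
  have sym: "\<And>x y. zs_is_square 10 (zs_add (zs_mult 10 x y) (4*n1, 4*n2)) \<Longrightarrow>
      zs_is_square 10 (zs_add (zs_mult 10 y x) (4*n1, 4*n2))"
    by (simp add: zs_mult_comm)
  have "\<forall>x\<in>{?a, ?b, ?c, ?d}. \<forall>y\<in>{?a, ?b, ?c, ?d}. x \<noteq> y \<longrightarrow>
      zs_is_square 10 (zs_add (zs_mult 10 x y) (4*n1, 4*n2))"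
    using S sym[OF S(1)] sym[OF S(2)] sym[OF S(3)] sym[OF S(4)] sym[OF S(5)] sym[OF S(6)]
    by blast
  then show ?thesis unfolding is_Dn_quadruple_def using card z by blast
qed

lemma norm_mult: "(a*c+10*b*d)^2 - 10*(a*d+b*c)^2 = (a^2-10*b^2)*(c^2-10*d^2::int)"
  by (simp add: algebra_simps power2_eq_square)

lemma mh60: "x = 60*K + r \<Longrightarrow> 0 \<le> r \<Longrightarrow> r < 60 \<Longrightarrow> x mod 60 = (r::int)"
  by simp

fun useq :: "nat \<Rightarrow> int \<times> int" where
  "useq 0 = (721, 228)"
| "useq (Suc i) = zs_mult 10 (useq i) (3117419602578001, 985814636660340)"

lemma useq_inv:
  "fst (useq i) mod 60 = 1 \<and> snd (useq i) mod 60 = 48 \<and>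
   (fst (useq i))^2 - 10*(snd (useq i))^2 = 1 \<and> fst (useq i) > 0 \<and> snd (useq i) > 0"
proof (induction i)
  case 0
  then show ?case by simp
next
  case (Suc i)
  obtain u1 u2 where u: "useq i = (u1, u2)" by (cases "useq i")
  from Suc u have m1: "u1 mod 60 = 1" and m2: "u2 mod 60 = 48"
    and nm: "u1^2 - 10*u2^2 = 1" and p1: "u1 > 0" and p2: "u2 > 0" by auto
  obtain x where x: "u1 = 60*x + 1" using m1 by (metis mult.commute div_mod_decomp_int)
  obtain y where y: "u2 = 60*y + 48" using m2 by (metis mult.commute div_mod_decomp_int)
  have e: "useq (Suc i) = (u1 * 3117419602578001 + 10 * u2 * 985814636660340,
                           u1 * 985814636660340 + u2 * 3117419602578001)"
    using u by (simp add: zs_mult_def)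
  have f1: "u1 * 3117419602578001 + 10 * u2 * 985814636660340
      = 60 * (x * 3117419602578001 + 51956993376300 + 10 * u2 * 16430243944339) + 1"
    using x by simp
  have f2: "u1 * 985814636660340 + u2 * 3117419602578001
      = 60 * (u1 * 16430243944339 + y * 3117419602578001 + 51956993376300 * 48) + 48"
    using y by simp
  have g: "(3117419602578001::int)^2 - 10 * 985814636660340^2 = 1" by simp
  have n: "(u1 * 3117419602578001 + 10 * u2 * 985814636660340)^2
       - 10 * (u1 * 985814636660340 + u2 * 3117419602578001)^2 = 1"
    using norm_mult[of u1 3117419602578001 u2 985814636660340] nm g by simp
  have q1: "(u1 * 3117419602578001 + 10 * u2 * 985814636660340) mod 60 = 1"
    using f1 by (rule mh60) simp_all
  have q2: "(u1 * 985814636660340 + u2 * 3117419602578001) mod 60 = 48"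
    using f2 by (rule mh60) simp_all
  have r1: "u1 * 3117419602578001 + 10 * u2 * 985814636660340 > 0" using p1 p2 by simp
  have r2: "u1 * 985814636660340 + u2 * 3117419602578001 > 0" using p1 p2 by simp
  show ?case unfolding e using q1 q2 n r1 r2 by simp
qed

lemma useq_mono: "fst (useq i) < fst (useq (Suc i))"
proof -
  have "fst (useq i) > 0" "snd (useq i) > 0" using useq_inv[of i] by auto
  then show ?thesis by (simp add: zs_mult_def)
qed

lemma useq_inj: "inj (\<lambda>i. fst (useq i))"
proof -
  have "strict_mono (\<lambda>i. fst (useq i))"
    using useq_mono by (simp add: strict_mono_Suc_iff)
  then show ?thesis by (rule strict_mono_imp_inj_on)
qed

lemma mh4: "x = 4*K + r \<Longrightarrow> 0 \<le> r \<Longrightarrow> r < 4 \<Longrightarrow> x mod 4 = (r::int)"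
  by simp

lemma sq_mod4: "(w::int)^2 mod 4 = 0 \<or> w^2 mod 4 = 1"
proof -
  obtain k where "w = 2*k \<or> w = 2*k+1" by (metis oddE evenE)
  then show ?thesis
  proof
    assume "w = 2*k" then have "w^2 = 4*(k^2)" by (simp add: power2_eq_square)
    then show ?thesis by simp
  next
    assume "w = 2*k+1" then have "w^2 = 4*(k^2+k) + 1" by (simp add: power2_eq_square algebra_simps)
    then have "w^2 mod 4 = 1" by (rule mh4) simp_all
    then show ?thesis by simp
  qed
qed

lemma cancel:
  fixes x y w Q :: int
  assumes e1: "x*w + 90*y*(30*Q+15) = 0" and e2: "9*x*(30*Q+15) + y*w = 0"
  shows "x = 0"
proof -
  have "x*(w^2 - 810*(30*Q+15)^2) = 0"
  proof -
    have "x*(w^2 - 810*(30*Q+15)^2) = w*(x*w + 90*y*(30*Q+15)) - 90*(30*Q+15)*(9*x*(30*Q+15) + y*w)"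
      by (simp add: algebra_simps power2_eq_square)
    then show ?thesis using e1 e2 by simp
  qed
  moreover have "w^2 - 810*(30*Q+15)^2 \<noteq> 0"
  proof
    assume a: "w^2 - 810*(30*Q+15)^2 = 0"
    have "w^2 = 4*(182250*Q^2+182250*Q+45562) + 2"
      using a by (simp add: algebra_simps power2_eq_square)
    then have "w^2 mod 4 = 2" by (rule mh4) simp_all
    then show False using sq_mod4[of w] by simp
  qed
  ultimately show ?thesis by simp
qed

lemma main_gen:
  fixes P Q :: int
  shows "infinite {S. is_Dn_quadruple 10 (4*(15*P+5), 4*(30*Q+15)) S}"
proof -
  define n1 where "n1 = 15*P+5"
  define n2 where "n2 = 30*Q+15"
  define Af where "Af i = fst (useq i) div 60" for i
  define Bf where "Bf i = snd (useq i) div 60" for i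
  have AB: "60 * Af i + 1 = fst (useq i)" "60 * Bf i + 48 = snd (useq i)" for i
    using useq_inv[of i] unfolding Af_def Bf_def
    by (metis add.commute div_mod_decomp_int mult.commute)+
  have hn: "(60*Af i+1)^2 - 10*(60*Bf i+48)^2 = 1" for i
    using useq_inv[of i] AB[of i] by simp
  define F where "F i = {qa n1 n2 (Af i) (Bf i), qb n1 n2 (Af i) (Bf i), qc n1 n2 (Af i) (Bf i), qd n1 n2 (Af i) (Bf i)}" for i
  have inF: "range F \<subseteq> {S. is_Dn_quadruple 10 (4*n1, 4*n2) S}"
    using quad[OF hn] unfolding F_def n1_def n2_def by auto
  have "inj F"
  proof
    fix i j assume eq: "F i = F j"
    let ?d = "qd n1 n2 (Af i) (Bf i)"
    have "?d \<in> F j" using eq unfolding F_def by auto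
    note C = congs[of P Q "Af j" "Bf j", folded n1_def n2_def]
    have D: "snd ?d mod 5 = 2"
      using congs(12)[of P Q "Af i" "Bf i", folded n1_def n2_def] .
    have m: "?d = qa n1 n2 (Af j) (Bf j) \<or> ?d = qb n1 n2 (Af j) (Bf j) \<or> ?d = qc n1 n2 (Af j) (Bf j) \<or> ?d = qd n1 n2 (Af j) (Bf j)"
      using \<open>?d \<in> F j\<close> unfolding F_def by simp
    have n1: "?d \<noteq> qa n1 n2 (Af j) (Bf j)" using C(3) D by auto
    have n2: "?d \<noteq> qb n1 n2 (Af j) (Bf j)" using C(6) D by auto
    have n3: "?d \<noteq> qc n1 n2 (Af j) (Bf j)" using C(9) D by auto
    have dd: "?d = qd n1 n2 (Af j) (Bf j)" using m n1 n2 n3 by blast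
    have "60*(Af i - Af j) = 0"
      apply (rule cancel[where y = "60*(Bf i - Bf j)" and w = "9*n1-1" and Q = Q])
      using dd unfolding qd_def n2_def prod_eq_iff by (simp_all add: algebra_simps)
    then have "fst (useq i) = fst (useq j)" using AB[of i] AB[of j] by simp
    then show "i = j" using useq_inj by (meson injD)
  qed
  then have "infinite (range F)" using finite_imageD[of F UNIV] infinite_UNIV_nat by blast
  then show ?thesis using inF infinite_super unfolding n1_def n2_def by blast
qed

theorem mainTheorem4:
  fixes m k :: int
  shows "(m mod 5 = 0 \<and> k mod 5 = 2 \<longrightarrow>
           infinite {S. is_Dn_quadruple 10 (4 * (12 * m + 5), 4 * (6 * k + 3)) S})
       \<and> (m mod 5 = 2 \<and> k mod 5 = 2 \<longrightarrow>
           infinite {S. is_Dn_quadruple 10 (4 * (12 * m + 11), 4 * (6 * k + 3)) S})"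
proof (intro conjI impI)
  assume a: "m mod 5 = 0 \<and> k mod 5 = 2"
  have e1: "12*m+5 = 15*((12*m) div 15)+5" and e2: "6*k+3 = 30*((6*k - 12) div 30)+15"
    using a by presburger+
  show "infinite {S. is_Dn_quadruple 10 (4 * (12 * m + 5), 4 * (6 * k + 3)) S}"
    using main_gen[of "(12*m) div 15" "(6*k - 12) div 30"] by (subst e1, subst e2) simp
next
  assume a: "m mod 5 = 2 \<and> k mod 5 = 2"
  have e1: "12*m+11 = 15*((12*m+6) div 15)+5" and e2: "6*k+3 = 30*((6*k - 12) div 30)+15"
    using a by presburger+
  show "infinite {S. is_Dn_quadruple 10 (4 * (12 * m + 11), 4 * (6 * k + 3)) S}"
    using main_gen[of "(12*m+6) div 15" "(6*k - 12) div 30"] by (subst e1, subst e2) simp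
qed

end
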